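(* Let $\mathcal{S}_m$ be the set of pairs $(R,\theta)$ with $R\in\mathbb{R}^{m\times m}$, $\theta\in\mathbb{R}^m$, $R=R'=R^2$ and $R\theta=0$. Define the loss $L((R_1,\theta_1),(R_2,\theta_2))=\|R_1-R_2\|^2+\|\theta_1-\theta_2\|^2$, with $\|A\|^2=\mathrm{Tr}(AA')$. Let $P_n$ be a probability distribution on $\mathcal{S}_m$ (the posterior) under which $\|\theta_2\|^2$ is integrable, and let $\bar R$ and $\bar\theta$ be the means of $R_2$ and $\theta_2$ under $P_n$. Let $2\bar R-\bar\theta\bar\theta'=\sum_{j=1}^m\lambda_jU_jU_j'$ with $\lambda_1\ge\dots\ge\lambda_m$ and $U_1,\dots,U_m$ orthonormal be a singular value (spectral) decomposition. Define $f(R,\theta)=\int L((R,\theta),(R_2,\theta_2))\,dP_n(R_2,\theta_2)$ for $(R,\theta)\in\mathcal{S}_m$. Then $f$ is minimized over $\mathcal{S}_m$ by $R=\sum_{j=1}^kU_jU_j'$ and $\theta=(I-R)\bar\theta$, where $k\in\{0,1,\dots,m\}$ minimizes $k-\sum_{j=1}^k\lambda_j$. The minimizer is unique if and only if there is a unique minimizing $k$ and $\lambda_k>\lambda_{k+1}$ for that $k$.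
   Context: $\mathcal{S}_m$ parametrizes affine subspaces of $\mathbb{R}^m$: $R$ is the projection matrix of the parallel linear subspace and $\theta$ is the projection of the origin onto the affine subspace. *)

theory Defs
  imports "HOL-Analysis.Analysis" "HOL-Probability.Probability"
begin

definition outer :: "real^'m \<Rightarrow> real^'m \<Rightarrow> real^'m^'m" where
  "outer u v = (\<chi> i j. u $ i * v $ j)"

definition frob2 :: "real^'m^'m \<Rightarrow> real" where
  "frob2 A = trace (A ** transpose A)"

text \<open>The parameter space S_m of affine subspaces.\<close>
definition Sm :: "((real^'m^'m) \<times> (real^'m)) set" where
  "Sm = {(R, \<theta>). R = transpose R \<and> R ** R = R \<and> R *v \<theta> = 0}"

definition loss :: "(real^'m^'m) \<times> (real^'m) \<Rightarrow> (real^'m^'m) \<times> (real^'m) \<Rightarrow> real" where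
  "loss p q = frob2 (fst p - fst q) + (norm (snd p - snd q))\<^sup>2"

definition post_risk :: "((real^'m^'m) \<times> (real^'m)) measure \<Rightarrow> (real^'m^'m) \<times> (real^'m) \<Rightarrow> real" where
  "post_risk P p = (\<integral>q. loss p q \<partial>P)"


definition kobj :: "(nat \<Rightarrow> real) \<Rightarrow> nat \<Rightarrow> real" where
  "kobj lam k = real k - (\<Sum>j=1..k. lam j)"

definition is_kmin :: "(nat \<Rightarrow> real) \<Rightarrow> nat \<Rightarrow> nat \<Rightarrow> bool" where
  "is_kmin lam m k \<longleftrightarrow> k \<le> m \<and> (\<forall>k'\<le>m. kobj lam k \<le> kobj lam k')"

definition projU :: "(nat \<Rightarrow> real^'m) \<Rightarrow> nat \<Rightarrow> real^'m^'m" where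
  "projU U k = (\<Sum>j=1..k. outer (U j) (U j))"

end

theory Submission imports Defs begin


lemma complete_basis:
  fixes U :: "nat \<Rightarrow> real^'m"
  assumes orth: "\<forall>i\<in>{1..CARD('m)}. \<forall>j\<in>{1..CARD('m)}. U i \<bullet> U j = (if i = j then 1 else 0)"
  shows "x = (\<Sum>j=1..CARD('m). (U j \<bullet> x) *\<^sub>R U j)"
proof -
  define n where "n = CARD('m)"
  define S where "S = U ` {1..n}"
  have inj: "inj_on U {1..n}"
  proof (rule inj_onI)
    fix i j assume "i \<in> {1..n}" "j \<in> {1..n}" "U i = U j"
    then have "U i \<bullet> U j = 1" using orth by (simp add: n_def)
    then show "i = j" using orth \<open>i \<in> {1..n}\<close> \<open>j \<in> {1..n}\<close> unfolding n_def by (metis zero_neq_one)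
  qed
  have cardS: "card S = n" using inj by (simp add: S_def card_image)
  have po: "pairwise orthogonal S"
    unfolding pairwise_def S_def orthogonal_def using orth n_def by auto
  have z: "0 \<notin> S"
  proof
    assume "0 \<in> S" then obtain i where "i \<in> {1..n}" "U i = 0" by (auto simp: S_def)
    then show False using orth n_def by (metis inner_zero_left zero_neq_one)
  qed
  have ind: "independent S" using pairwise_orthogonal_independent[OF po z] .
  have "UNIV \<subseteq> span S"
    by (rule card_ge_dim_independent) (use ind cardS n_def in auto)
  define y where "y = x - (\<Sum>j=1..n. (U j \<bullet> x) *\<^sub>R U j)"
  have oS: "orthogonal y u" if "u \<in> S" for u
  proof -
    obtain i where i: "i \<in> {1..n}" "u = U i" using \<open>u \<in> S\<close> by (auto simp: S_def)
    have "(\<Sum>j=1..n. (U j \<bullet> x) * (U j \<bullet> U i)) = (\<Sum>j=1..n. if j = i then U i \<bullet> x else 0)"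
      by (rule sum.cong) (use orth i n_def in auto)
    also have "\<dots> = U i \<bullet> x" using i by simp
    finally have e: "(\<Sum>j=1..n. (U j \<bullet> x) * (U j \<bullet> U i)) = U i \<bullet> x" .
    have "y \<bullet> U i = x \<bullet> U i - (\<Sum>j=1..n. (U j \<bullet> x) * (U j \<bullet> U i))"
      by (simp add: y_def inner_diff_left inner_sum_left)
    then show ?thesis using i e by (simp add: orthogonal_def inner_commute)
  qed
  have "orthogonal y y"
    using orthogonal_to_span[of y S y] \<open>UNIV \<subseteq> span S\<close> oS by (auto simp: orthogonal_commute)
  then have "y = 0" by (simp add: orthogonal_def)
  then show ?thesis by (simp add: y_def n_def)
qed

lemma outer_mv: "outer u v *v x = (v \<bullet> x) *\<^sub>R u"
  by (simp add: vec_eq_iff matrix_vector_mult_def outer_def inner_vec_def sum_distrib_left ac_simps)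

lemma inner_outer: "(R::real^'m^'m) \<bullet> outer u v = u \<bullet> (R *v v)"
  by (simp add: inner_vec_def matrix_vector_mult_def outer_def sum_distrib_left ac_simps)

lemma sum_mv: "(\<Sum>a\<in>S. A a) *v (x::real^'m) = (\<Sum>a\<in>S. A a *v x)"
  by (induction S rule: infinite_finite_induct) (auto simp: algebra_simps)

lemma mv_sum: "(A::real^'m^'n) *v (\<Sum>a\<in>S. f a) = (\<Sum>a\<in>S. A *v f a)"
  by (induction S rule: infinite_finite_induct) (auto simp: algebra_simps)

lemma projU_mv: "projU U k *v x = (\<Sum>j=1..k. (U j \<bullet> x) *\<^sub>R U j)"
  by (simp add: projU_def sum_mv outer_mv)

lemma projU_component: "projU U k $ i $ j = (\<Sum>l=1..k. U l $ i * U l $ j)"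
  by (simp add: projU_def outer_def)

lemma projU_basis:
  fixes U :: "nat \<Rightarrow> real^'m"
  assumes orth: "\<forall>i\<in>{1..CARD('m)}. \<forall>j\<in>{1..CARD('m)}. U i \<bullet> U j = (if i = j then 1 else 0)"
    and k: "k \<le> CARD('m)" and i: "i \<in> {1..CARD('m)}"
  shows "projU U k *v U i = (if i \<le> k then U i else 0)"
proof -
  have "projU U k *v U i = (\<Sum>j=1..k. if j = i then U i else 0)"
    unfolding projU_mv by (rule sum.cong) (use orth k i in auto)
  also have "\<dots> = (if i \<le> k then U i else 0)" using i by simp
  finally show ?thesis .
qed

lemma mat1_projU:
  fixes U :: "nat \<Rightarrow> real^'m"
  assumes orth: "\<forall>i\<in>{1..CARD('m)}. \<forall>j\<in>{1..CARD('m)}. U i \<bullet> U j = (if i = j then 1 else 0)"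
  shows "mat 1 = projU U CARD('m)"
  unfolding matrix_eq projU_mv using complete_basis[OF orth, symmetric] by simp

lemma sym_inner: assumes "R = transpose R" shows "x \<bullet> (R *v y) = (R *v x) \<bullet> (y::real^'m)"
proof -
  have "x v* R = R *v x" using vector_transpose_matrix[of x R] assms by metis
  then show ?thesis using dot_lmul_matrix[of x R y] by simp
qed

lemma idem_mv: "R ** R = R \<Longrightarrow> R *v (R *v x) = R *v x"
  by (simp add: matrix_vector_mul_assoc)

lemma quad_eq: "R = transpose R \<Longrightarrow> R ** R = R \<Longrightarrow> (R *v x) \<bullet> (R *v x) = x \<bullet> (R *v (x::real^'m))"
  by (metis sym_inner idem_mv)

lemma quad_split: assumes "R = transpose R" "R ** R = R" shows
   "x \<bullet> x - x \<bullet> (R *v x) = (x - R *v x) \<bullet> (x - R *v (x::real^'m))"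
proof -
  have e: "(x - R *v x) \<bullet> (x - R *v x) = x \<bullet> x - x \<bullet> (R *v x) - (R *v x) \<bullet> x + (R *v x) \<bullet> (R *v x)"
    by (simp add: inner_diff_left inner_diff_right)
  have "(R *v x) \<bullet> x = x \<bullet> (R *v x)" by (rule inner_commute)
  then show ?thesis using e quad_eq[OF assms, of x] by linarith
qed

lemma quad_bounds:
  assumes "R = transpose R" "R ** R = R"
  shows "0 \<le> x \<bullet> (R *v x)" "x \<bullet> (R *v x) \<le> x \<bullet> (x::real^'m)"
proof -
  show "0 \<le> x \<bullet> (R *v x)" using quad_eq[OF assms, of x] by (metis inner_ge_zero)
  have "0 \<le> (x - R *v x) \<bullet> (x - R *v x)" by simp
  then show "x \<bullet> (R *v x) \<le> x \<bullet> (x::real^'m)" using quad_split[OF assms, of x] by linarith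
qed

lemma quad_one:
  assumes "R = transpose R" "R ** R = R" "x \<bullet> (R *v x) = x \<bullet> (x::real^'m)"
  shows "R *v x = x"
  using quad_split[OF assms(1,2), of x] assms(3) by (simp del: inner_diff_left inner_diff_right)

lemma quad_zero:
  assumes "R = transpose R" "R ** R = R" "x \<bullet> (R *v x) = (0::real)"
  shows "R *v x = (0::real^'m)"
  using quad_eq[OF assms(1,2), of x] assms(3) by (simp only: inner_eq_zero_iff)

lemma trace_inner:
  assumes "R = transpose R" "R ** R = R"
  shows "R \<bullet> R = R \<bullet> (mat 1 :: real^'m^'m)"
proof -
  have sy: "R $ i $ k = R $ k $ i" for i k
    using arg_cong[OF assms(1), of "\<lambda>A. A $ i $ k"] by (simp add: transpose_def)
  have "R $ i $ i = (\<Sum>k\<in>UNIV. R $ i $ k * R $ i $ k)" for i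
  proof -
    have "R $ i $ i = (R ** R) $ i $ i" using assms(2) by simp
    also have "\<dots> = (\<Sum>k\<in>UNIV. R $ i $ k * R $ k $ i)" by (simp add: matrix_matrix_mult_def)
    also have "\<dots> = (\<Sum>k\<in>UNIV. R $ i $ k * R $ i $ k)"
      by (rule sum.cong) (auto simp: sy[of _ i])
    finally show ?thesis .
  qed
  then show ?thesis
    by (simp add: inner_vec_def mat_def if_distrib cong: if_cong)
qed

lemma frob2_norm: "frob2 A = (norm A)\<^sup>2"
  by (simp add: frob2_def power2_norm_eq_inner trace_def matrix_matrix_mult_def transpose_def inner_vec_def)


lemma projU_sym: "transpose (projU U k) = projU U k"
  by (simp add: vec_eq_iff transpose_def projU_component mult.commute)

lemma projU_idem:
  fixes U :: "nat \<Rightarrow> real^'m"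
  assumes orth: "\<forall>i\<in>{1..CARD('m)}. \<forall>j\<in>{1..CARD('m)}. U i \<bullet> U j = (if i = j then 1 else 0)"
    and k: "k \<le> CARD('m)"
  shows "projU U k ** projU U k = projU U k"
  unfolding matrix_eq
proof
  fix x
  have "(projU U k ** projU U k) *v x = projU U k *v (projU U k *v x)"
    by (simp add: matrix_vector_mul_assoc)
  also have "\<dots> = (\<Sum>j=1..k. (U j \<bullet> x) *\<^sub>R (projU U k *v U j))"
    by (simp add: projU_mv[of U k x] mv_sum matrix_vector_mult_scaleR)
  also have "\<dots> = (\<Sum>j=1..k. (U j \<bullet> x) *\<^sub>R U j)"
    by (rule sum.cong) (use projU_basis[OF orth k] k in auto)
  finally show "(projU U k ** projU U k) *v x = projU U k *v x" by (simp add: projU_mv)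
qed

lemma projU_Sm:
  fixes U :: "nat \<Rightarrow> real^'m"
  assumes orth: "\<forall>i\<in>{1..CARD('m)}. \<forall>j\<in>{1..CARD('m)}. U i \<bullet> U j = (if i = j then 1 else 0)"
    and k: "k \<le> CARD('m)"
  shows "(projU U k, (mat 1 - projU U k) *v t) \<in> Sm"
proof -
  have i: "projU U k ** projU U k = projU U k" by (rule projU_idem[OF orth k])
  have "projU U k *v ((mat 1 - projU U k) *v t) = 0"
    by (simp add: matrix_vector_mult_diff_rdistrib matrix_vector_mult_diff_distrib idem_mv[OF i])
  then show ?thesis using i projU_sym[of U k] by (simp add: Sm_def)
qed

lemma maxset:
  fixes lam :: "nat \<Rightarrow> real"
  assumes sorted: "\<forall>i\<in>{1..n}. \<forall>j\<in>{1..n}. i \<le> j \<longrightarrow> lam j \<le> lam i"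
    and Q: "\<And>a b. Q a \<Longrightarrow> a \<le> b \<Longrightarrow> Q b"
  defines "K \<equiv> Max ({0} \<union> {j\<in>{1..n}. Q (lam j)})"
  shows "K \<le> n" "\<forall>j\<in>{1..n}. Q (lam j) \<longleftrightarrow> j \<le> K"
proof -
  have fin: "finite ({0} \<union> {j\<in>{1..n}. Q (lam j)})" by auto
  have mem: "K \<in> {0} \<union> {j\<in>{1..n}. Q (lam j)}" unfolding K_def by (rule Max_in[OF fin]) auto
  then show "K \<le> n" by auto
  show "\<forall>j\<in>{1..n}. Q (lam j) \<longleftrightarrow> j \<le> K"
  proof
    fix j assume j: "j \<in> {1..n}"
    show "Q (lam j) \<longleftrightarrow> j \<le> K"
    proof
      assume "Q (lam j)" then show "j \<le> K" unfolding K_def using j fin by (intro Max_ge) auto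
    next
      assume jk: "j \<le> K"
      then have "K \<in> {j\<in>{1..n}. Q (lam j)}" using mem j by auto
      then show "Q (lam j)" using sorted j jk Q by auto
    qed
  qed
qed

lemma split_sum: "k \<le> n \<Longrightarrow> (\<Sum>j=1..n. f j) = (\<Sum>j=1..k. f j) + (\<Sum>j=Suc k..n. (f j::real))"
proof -
  assume "k \<le> n"
  then have "{1..n} = {1..k} \<union> {Suc k..n}" by auto
  then show ?thesis by (simp add: sum.union_disjoint ivl_disj_int)
qed

lemma kobj_diff:
  assumes "k \<le> n"
  shows "kobj lam k - (\<Sum>j=1..n. min 0 (1 - lam j)) =
     (\<Sum>j=1..k. (1 - lam j) - min 0 (1 - lam j)) + (\<Sum>j=Suc k..n. - min 0 (1 - lam j))"
  using split_sum[OF assms, of "\<lambda>j. min 0 (1 - lam j)"]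
  by (simp add: kobj_def sum_subtractf sum_negf)

lemma kobj_ge:
  assumes "k \<le> n"
  shows "(\<Sum>j=1..n. min 0 (1 - lam j)) \<le> kobj lam k"
proof -
  have "0 \<le> (\<Sum>j=1..k. (1 - lam j) - min 0 (1 - lam j)) + (\<Sum>j=Suc k..n. - min 0 (1 - lam j))"
    by (intro add_nonneg_nonneg sum_nonneg) auto
  then show ?thesis using kobj_diff[OF assms, of lam] by linarith
qed

lemma kobj_eq_iff:
  assumes "k \<le> n"
  shows "kobj lam k = (\<Sum>j=1..n. min 0 (1 - lam j)) \<longleftrightarrow>
     (\<forall>j\<in>{1..k}. 1 \<le> lam j) \<and> (\<forall>j\<in>{Suc k..n}. lam j \<le> 1)"
proof -
  have a: "0 \<le> (\<Sum>j=1..k. (1 - lam j) - min 0 (1 - lam j))" by (intro sum_nonneg) auto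
  have b: "0 \<le> (\<Sum>j=Suc k..n. - min 0 (1 - lam j))" by (intro sum_nonneg) auto
  have "kobj lam k = (\<Sum>j=1..n. min 0 (1 - lam j)) \<longleftrightarrow>
     (\<Sum>j=1..k. (1 - lam j) - min 0 (1 - lam j)) = 0 \<and> (\<Sum>j=Suc k..n. - min 0 (1 - lam j)) = 0"
    using kobj_diff[OF assms, of lam] a b by linarith
  also have "\<dots> \<longleftrightarrow> (\<forall>j\<in>{1..k}. (1 - lam j) - min 0 (1 - lam j) = 0) \<and> (\<forall>j\<in>{Suc k..n}. - min 0 (1 - lam j) = 0)"
    by (subst sum_nonneg_eq_0_iff, simp, simp)+ simp
  also have "\<dots> \<longleftrightarrow> (\<forall>j\<in>{1..k}. 1 \<le> lam j) \<and> (\<forall>j\<in>{Suc k..n}. lam j \<le> 1)"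
    by (auto simp: min_def split: if_splits)
  finally show ?thesis .
qed

lemma kmin_iff:
  fixes lam :: "nat \<Rightarrow> real"
  assumes sorted: "\<forall>i\<in>{1..n}. \<forall>j\<in>{1..n}. i \<le> j \<longrightarrow> lam j \<le> lam i"
  shows "is_kmin lam n k \<longleftrightarrow> k \<le> n \<and> (\<forall>j\<in>{1..k}. 1 \<le> lam j) \<and> (\<forall>j\<in>{Suc k..n}. lam j \<le> 1)"
proof -
  define V where "V = (\<Sum>j=1..n. min 0 (1 - lam j))"
  define K where "K = Max ({0} \<union> {j\<in>{1..n}. 1 < lam j})"
  have K: "K \<le> n" "\<forall>j\<in>{1..n}. 1 < lam j \<longleftrightarrow> j \<le> K"
    using maxset[OF sorted, of "\<lambda>x. 1 < x"] unfolding K_def[symmetric] by simp_all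
  have "(\<forall>j\<in>{1..K}. 1 \<le> lam j) \<and> (\<forall>j\<in>{Suc K..n}. lam j \<le> 1)"
  proof (intro conjI ballI)
    fix j assume j: "j \<in> {1..K}" then have "j \<in> {1..n}" using K(1) by auto then have "1 < lam j" using K(2) j by auto then show "1 \<le> lam j" by simp
  next
    fix j assume j: "j \<in> {Suc K..n}" then have "\<not> 1 < lam j" using K(2) by auto then show "lam j \<le> 1" by simp
  qed
  then have kK: "kobj lam K = V" unfolding V_def using kobj_eq_iff[OF K(1)] by blast
  have ge: "\<And>k'. k' \<le> n \<Longrightarrow> V \<le> kobj lam k'" unfolding V_def by (rule kobj_ge)
  have "is_kmin lam n k \<longleftrightarrow> k \<le> n \<and> kobj lam k = V"
  proof
    assume "is_kmin lam n k"
    then have "k \<le> n" "kobj lam k \<le> kobj lam K" using K(1) unfolding is_kmin_def by auto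
    then show "k \<le> n \<and> kobj lam k = V" using kK ge[of k] by linarith
  next
    assume "k \<le> n \<and> kobj lam k = V" then show "is_kmin lam n k" unfolding is_kmin_def using ge by auto
  qed
  then show ?thesis using kobj_eq_iff[of k n lam] V_def by auto
qed


lemma tr_sum:
  fixes U :: "nat \<Rightarrow> real^'m"
  assumes orth: "\<forall>i\<in>{1..CARD('m)}. \<forall>j\<in>{1..CARD('m)}. U i \<bullet> U j = (if i = j then 1 else 0)"
  shows "(R::real^'m^'m) \<bullet> mat 1 = (\<Sum>j=1..CARD('m). U j \<bullet> (R *v U j))"
  by (simp add: mat1_projU[OF orth] projU_def inner_sum_right inner_outer)

lemma normdiff: "(norm (a - b))\<^sup>2 = a \<bullet> a - 2 * (a \<bullet> b) + b \<bullet> (b::'a::real_inner)"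
proof -
  have "(norm (a - b))\<^sup>2 = (a - b) \<bullet> (a - b)" by (simp add: power2_norm_eq_inner)
  also have "\<dots> = a \<bullet> a - a \<bullet> b - b \<bullet> a + b \<bullet> b" by (simp add: inner_diff_left inner_diff_right)
  also have "b \<bullet> a = a \<bullet> b" by (rule inner_commute)
  finally show ?thesis by simp
qed

lemma Sm_norm_bound:
  fixes U :: "nat \<Rightarrow> real^'m"
  assumes orth: "\<forall>i\<in>{1..CARD('m)}. \<forall>j\<in>{1..CARD('m)}. U i \<bullet> U j = (if i = j then 1 else 0)"
    and q: "q \<in> (Sm :: ((real^'m^'m) \<times> (real^'m)) set)"
  shows "(norm (fst q))\<^sup>2 \<le> real CARD('m)"
proof -
  obtain R :: "real^'m^'m" and t where qq: "q = (R, t)" "R = transpose R" "R ** R = R" using q by (auto simp: Sm_def)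
  have "(norm R)\<^sup>2 = R \<bullet> mat 1" using trace_inner[OF qq(2,3)] by (simp add: power2_norm_eq_inner)
  also have "\<dots> = (\<Sum>j=1..CARD('m). U j \<bullet> (R *v U j))" by (rule tr_sum[OF orth])
  also have "\<dots> \<le> (\<Sum>j=1..CARD('m). 1)"
  proof (rule sum_mono)
    fix j assume "j \<in> {1..CARD('m)}"
    then have "U j \<bullet> U j = 1" using orth by auto
    then show "U j \<bullet> (R *v U j) \<le> 1" using quad_bounds(2)[OF qq(2,3), of "U j"] by simp
  qed
  finally show ?thesis using qq by simp
qed

lemma xle: "(x::real) \<le> 1 + x\<^sup>2"
proof (cases "x \<le> 1")
  case True then show ?thesis by (smt (verit) zero_le_power2)
next
  case False then have "x * 1 \<le> x * x" by (intro mult_left_mono) auto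
  then show ?thesis by (simp add: power2_eq_square)
qed


lemma risk_formula:
  fixes P :: "((real^'m^'m) \<times> (real^'m)) measure"
    and U :: "nat \<Rightarrow> real^'m" and lam :: "nat \<Rightarrow> real"
  assumes prob: "prob_space P"
    and sets_P: "sets P = sets borel"
    and supp: "AE q in P. q \<in> Sm"
    and integ: "integrable P (\<lambda>q. (norm (snd q))\<^sup>2)"
    and orth: "\<forall>i\<in>{1..CARD('m)}. \<forall>j\<in>{1..CARD('m)}. U i \<bullet> U j = (if i = j then 1 else 0)"
    and decomp: "2 *\<^sub>R (\<integral>q. fst q \<partial>P) - outer (\<integral>q. snd q \<partial>P) (\<integral>q. snd q \<partial>P)
                   = (\<Sum>j=1..CARD('m). lam j *\<^sub>R outer (U j) (U j))"
    and p: "(R, \<theta>) \<in> Sm"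
  shows "post_risk P (R, \<theta>) = (\<Sum>j=1..CARD('m). (1 - lam j) * (U j \<bullet> (R *v U j)))
     + (norm (\<theta> - (mat 1 - R) *v (\<integral>q. snd q \<partial>P)))\<^sup>2
     + ((\<integral>q. (norm (fst q))\<^sup>2 + (norm (snd q))\<^sup>2 \<partial>P) - (\<integral>q. snd q \<partial>P) \<bullet> (\<integral>q. snd q \<partial>P))"
proof -
  interpret prob_space P by (rule prob)
  define n where "n = CARD('m)"
  define Rb where "Rb = (\<integral>q. fst q \<partial>P)"
  define tb where "tb = (\<integral>q. snd q \<partial>P)"
  define h where "h = (\<lambda>q::(real^'m^'m) \<times> (real^'m). (norm (fst q))\<^sup>2 + (norm (snd q))\<^sup>2)"
  have meas: "f \<in> borel_measurable P" if "continuous_on UNIV f" for f :: "(real^'m^'m) \<times> (real^'m) \<Rightarrow> 'b::topological_space"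
    using borel_measurable_continuous_onI[OF that] measurable_cong_sets[OF sets_P refl] by blast
  have bnd: "AE q in P. (norm (fst q))\<^sup>2 \<le> real n"
    using supp by eventually_elim (use Sm_norm_bound[OF orth] n_def in auto)
  have int_fst: "integrable P fst"
  proof (rule integrable_const_bound[where B="sqrt (real n)"])
    show "AE x in P. norm (fst x) \<le> sqrt (real n)" using bnd by eventually_elim (simp add: real_le_rsqrt)
    show "fst \<in> borel_measurable P" by (rule meas) (intro continuous_intros)
  qed
  have int_fst2: "integrable P (\<lambda>q. (norm (fst q))\<^sup>2)"
  proof (rule integrable_const_bound[where B="real n"])
    show "AE x in P. norm ((norm (fst x))\<^sup>2) \<le> real n" using bnd by eventually_elim simp
    show "(\<lambda>q. (norm (fst q))\<^sup>2) \<in> borel_measurable P" by (rule meas) (intro continuous_intros)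
  qed
  have int_snd: "integrable P snd"
  proof (rule Bochner_Integration.integrable_bound[where f="\<lambda>q. 1 + (norm (snd q))\<^sup>2"])
    show "integrable P (\<lambda>q. 1 + (norm (snd q))\<^sup>2)" using integ by simp
    show "snd \<in> borel_measurable P" by (rule meas) (intro continuous_intros)
    show "AE x in P. norm (snd x) \<le> norm (1 + (norm (snd x))\<^sup>2)"
      by (intro AE_I2) (simp add: xle)
  qed
  have int_h: "integrable P h" unfolding h_def using int_fst2 integ by simp
  have loss_eq: "loss (R, \<theta>) q = ((R \<bullet> R + \<theta> \<bullet> \<theta>) - 2 * (R \<bullet> fst q) - 2 * (\<theta> \<bullet> snd q)) + h q" for q
  proof -
    have a: "loss (R, \<theta>) q = (norm (R - fst q))\<^sup>2 + (norm (\<theta> - snd q))\<^sup>2" by (simp add: loss_def frob2_norm)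
    have b: "h q = fst q \<bullet> fst q + snd q \<bullet> snd q" by (simp add: h_def power2_norm_eq_inner)
    show ?thesis unfolding a b normdiff by simp
  qed
  have int1: "integrable P (\<lambda>q. (R \<bullet> R + \<theta> \<bullet> \<theta>) - 2 * (R \<bullet> fst q) - 2 * (\<theta> \<bullet> snd q))"
    using int_fst int_snd by simp
  have "post_risk P (R, \<theta>) = (\<integral>q. ((R \<bullet> R + \<theta> \<bullet> \<theta>) - 2 * (R \<bullet> fst q) - 2 * (\<theta> \<bullet> snd q)) + h q \<partial>P)"
    unfolding post_risk_def loss_eq ..
  also have "\<dots> = (\<integral>q. (R \<bullet> R + \<theta> \<bullet> \<theta>) - 2 * (R \<bullet> fst q) - 2 * (\<theta> \<bullet> snd q) \<partial>P) + (\<integral>q. h q \<partial>P)"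
    by (rule Bochner_Integration.integral_add[OF int1 int_h])
  also have "(\<integral>q. (R \<bullet> R + \<theta> \<bullet> \<theta>) - 2 * (R \<bullet> fst q) - 2 * (\<theta> \<bullet> snd q) \<partial>P)
      = (R \<bullet> R + \<theta> \<bullet> \<theta>) - 2 * (R \<bullet> Rb) - 2 * (\<theta> \<bullet> tb)"
    using int_fst int_snd by (simp add: Rb_def tb_def prob_space)
  finally have E1: "post_risk P (R, \<theta>) = (R \<bullet> R + \<theta> \<bullet> \<theta>) - 2 * (R \<bullet> Rb) - 2 * (\<theta> \<bullet> tb) + (\<integral>q. h q \<partial>P)" .
  have Rs: "R = transpose R" and Ri: "R ** R = R" and Rt: "R *v \<theta> = 0" using p by (auto simp: Sm_def)
  have "2 * (R \<bullet> Rb) = R \<bullet> (2 *\<^sub>R Rb)" by simp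
  also have "2 *\<^sub>R Rb = (\<Sum>j=1..n. lam j *\<^sub>R outer (U j) (U j)) + outer tb tb"
    using decomp unfolding Rb_def tb_def n_def by (simp add: algebra_simps)
  finally have E2: "2 * (R \<bullet> Rb) = (\<Sum>j=1..n. lam j * (U j \<bullet> (R *v U j))) + tb \<bullet> (R *v tb)"
    by (simp add: inner_add_right inner_sum_right inner_outer)
  have E3: "R \<bullet> R = (\<Sum>j=1..n. U j \<bullet> (R *v U j))"
    using trace_inner[OF Rs Ri] tr_sum[OF orth, of R] n_def by simp
  define c where "c = tb - R *v tb"
  have cdef: "(mat 1 - R) *v tb = c" by (simp add: c_def matrix_vector_mult_diff_rdistrib)
  have t1: "\<theta> \<bullet> (R *v tb) = 0" using sym_inner[OF Rs, of \<theta> tb] Rt by simp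
  have t2: "(R *v tb) \<bullet> (R *v tb) = tb \<bullet> (R *v tb)" by (rule quad_eq[OF Rs Ri])
  have E4: "(norm (\<theta> - c))\<^sup>2 = \<theta> \<bullet> \<theta> - 2 * (\<theta> \<bullet> tb) + tb \<bullet> tb - tb \<bullet> (R *v tb)"
  proof -
    have "\<theta> \<bullet> c = \<theta> \<bullet> tb" using t1 by (simp add: c_def inner_diff_right)
    moreover have "c \<bullet> c = tb \<bullet> tb - 2 * (tb \<bullet> (R *v tb)) + (R *v tb) \<bullet> (R *v tb)"
      using normdiff[of tb "R *v tb"] by (simp add: c_def power2_norm_eq_inner)
    ultimately show ?thesis using normdiff[of \<theta> c] t2 by linarith
  qed
  have E5: "(\<Sum>j=1..n. (1 - lam j) * (U j \<bullet> (R *v U j))) = (\<Sum>j=1..n. U j \<bullet> (R *v U j)) - (\<Sum>j=1..n. lam j * (U j \<bullet> (R *v U j)))"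
    by (simp add: left_diff_distrib sum_subtractf)
  show ?thesis
    unfolding tb_def[symmetric] n_def[symmetric] cdef h_def[symmetric]
    using E1 E2 E3 E4 E5 by linarith
qed



lemma kmin_K:
  fixes lam :: "nat \<Rightarrow> real"
  assumes sorted: "\<forall>i\<in>{1..n}. \<forall>j\<in>{1..n}. i \<le> j \<longrightarrow> lam j \<le> lam i"
    and Q: "\<And>a b. Q a \<Longrightarrow> a \<le> b \<Longrightarrow> Q b" and Q1: "\<And>x. x < 1 \<Longrightarrow> \<not> Q x" and Q2: "\<And>x. 1 < x \<Longrightarrow> Q x"
  defines "K \<equiv> Max ({0} \<union> {j\<in>{1..n}. Q (lam j)})"
  shows "is_kmin lam n K" "\<forall>j\<in>{1..n}. Q (lam j) \<longleftrightarrow> j \<le> K"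
proof -
  have K: "K \<le> n" "\<forall>j\<in>{1..n}. Q (lam j) \<longleftrightarrow> j \<le> K"
    using maxset[OF sorted, of Q, OF Q] unfolding K_def[symmetric] by simp_all
  then show "\<forall>j\<in>{1..n}. Q (lam j) \<longleftrightarrow> j \<le> K" by simp
  have a: "1 \<le> lam j" if j: "j \<in> {1..K}" for j
  proof -
    have "j \<in> {1..n}" using j K(1) by auto
    then have "Q (lam j)" using K(2) j by auto
    then show ?thesis using Q1 by force
  qed
  have b: "lam j \<le> 1" if j: "j \<in> {Suc K..n}" for j
  proof -
    have "\<not> Q (lam j)" using K(2) j by auto
    then show ?thesis using Q2 by force
  qed
  show "is_kmin lam n K" using kmin_iff[OF sorted] K(1) a b by blast
qed

lemma rhs_iff:
  fixes lam :: "nat \<Rightarrow> real"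
  assumes sorted: "\<forall>i\<in>{1..n}. \<forall>j\<in>{1..n}. i \<le> j \<longrightarrow> lam j \<le> lam i"
  shows "((\<exists>!k. is_kmin lam n k) \<and> (\<forall>k. is_kmin lam n k \<longrightarrow> 1 \<le> k \<longrightarrow> k < n \<longrightarrow> lam k > lam (k + 1)))
     \<longleftrightarrow> (\<forall>j\<in>{1..n}. lam j \<noteq> 1)"
proof
  assume r: "(\<exists>!k. is_kmin lam n k) \<and> (\<forall>k. is_kmin lam n k \<longrightarrow> 1 \<le> k \<longrightarrow> k < n \<longrightarrow> lam k > lam (k + 1))"
  show "\<forall>j\<in>{1..n}. lam j \<noteq> 1"
  proof (rule ccontr)
    assume "\<not> (\<forall>j\<in>{1..n}. lam j \<noteq> 1)"
    then obtain j0 where j0: "j0 \<in> {1..n}" "lam j0 = 1" by auto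
    define K0 where "K0 = Max ({0} \<union> {j\<in>{1..n}. 1 < lam j})"
    define K1 where "K1 = Max ({0} \<union> {j\<in>{1..n}. 1 \<le> lam j})"
    have k0: "is_kmin lam n K0" "\<forall>j\<in>{1..n}. 1 < lam j \<longleftrightarrow> j \<le> K0"
      unfolding K0_def by (rule kmin_K[OF sorted, where Q="\<lambda>x. 1 < x"]; simp)+
    have k1: "is_kmin lam n K1" "\<forall>j\<in>{1..n}. 1 \<le> lam j \<longleftrightarrow> j \<le> K1"
      unfolding K1_def by (rule kmin_K[OF sorted, where Q="\<lambda>x. 1 \<le> x"]; simp)+
    have "\<not> j0 \<le> K0" using k0(2) j0 by (metis less_irrefl)
    moreover have "j0 \<le> K1" using k1(2) j0 by (metis order_refl)
    ultimately have "K0 < j0" "j0 \<le> K1" by auto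
    then have "K0 \<noteq> K1" by auto
    then show False using r k0(1) k1(1) by blast
  qed
next
  assume T: "\<forall>j\<in>{1..n}. lam j \<noteq> 1"
  define K0 where "K0 = Max ({0} \<union> {j\<in>{1..n}. 1 < lam j})"
  have k0: "is_kmin lam n K0"
    unfolding K0_def by (rule kmin_K[OF sorted, where Q="\<lambda>x. 1 < x"]; simp)+
  have uniq: "k = k'" if "is_kmin lam n k" "is_kmin lam n k'" "k \<le> k'" for k k'
  proof (rule ccontr)
    assume "k \<noteq> k'"
    then have kk: "k < k'" using that(3) by simp
    have a: "k' \<le> n" "(\<forall>j\<in>{1..k'}. 1 \<le> lam j)" using that(2) kmin_iff[OF sorted] by auto
    have b: "(\<forall>j\<in>{Suc k..n}. lam j \<le> 1)" using that(1) kmin_iff[OF sorted] by auto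
    have "1 \<le> lam k'" "lam k' \<le> 1" using a b kk by auto
    moreover have "k' \<in> {1..n}" using a kk by auto
    ultimately show False using T by fastforce
  qed
  have "\<exists>!k. is_kmin lam n k"
  proof (rule ex1I[of _ K0])
    show "is_kmin lam n K0" by (rule k0)
    fix k assume "is_kmin lam n k"
    then show "k = K0"
    proof (cases "k \<le> K0")
      case True then show ?thesis using uniq[OF \<open>is_kmin lam n k\<close> k0] by simp
    next
      case False then show ?thesis using uniq[OF k0 \<open>is_kmin lam n k\<close>] by simp
    qed
  qed
  moreover have "lam k > lam (k + 1)" if "is_kmin lam n k" "1 \<le> k" "k < n" for k
  proof -
    have "1 \<le> lam k" "lam (k+1) \<le> 1" using that kmin_iff[OF sorted, of k] by auto
    moreover have "lam k \<noteq> 1" "lam (k+1) \<noteq> 1" using T that by auto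
    ultimately show ?thesis by linarith
  qed
  ultimately show "(\<exists>!k. is_kmin lam n k) \<and> (\<forall>k. is_kmin lam n k \<longrightarrow> 1 \<le> k \<longrightarrow> k < n \<longrightarrow> lam k > lam (k + 1))"
    by blast
qed


lemma G_ge:
  fixes U :: "nat \<Rightarrow> real^'m" and lam :: "nat \<Rightarrow> real"
  assumes orth: "\<forall>i\<in>{1..CARD('m)}. \<forall>j\<in>{1..CARD('m)}. U i \<bullet> U j = (if i = j then 1 else 0)"
    and Rs: "R = transpose R" and Ri: "R ** R = R"
    and j: "j \<in> {1..CARD('m)}"
  shows "min 0 (1 - lam j) \<le> (1 - lam j) * (U j \<bullet> (R *v U j))"
proof -
  have u: "U j \<bullet> U j = 1" using orth j by auto
  have a0: "0 \<le> U j \<bullet> (R *v U j)" and a1: "U j \<bullet> (R *v U j) \<le> 1"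
    using quad_bounds[OF Rs Ri, of "U j"] u by auto
  show ?thesis
  proof (cases "0 \<le> 1 - lam j")
    case True then show ?thesis using a0 by (simp add: min_def)
  next
    case False
    then have "(1 - lam j) * 1 \<le> (1 - lam j) * (U j \<bullet> (R *v U j))"
      using a1 by (intro mult_left_mono_neg) auto
    then show ?thesis using False by (simp add: min_def)
  qed
qed

lemma G_proj:
  fixes U :: "nat \<Rightarrow> real^'m" and lam :: "nat \<Rightarrow> real"
  assumes orth: "\<forall>i\<in>{1..CARD('m)}. \<forall>j\<in>{1..CARD('m)}. U i \<bullet> U j = (if i = j then 1 else 0)"
    and k: "k \<le> CARD('m)"
  shows "(\<Sum>j=1..CARD('m). (1 - lam j) * (U j \<bullet> (projU U k *v U j))) = kobj lam k"
proof -
  have "(\<Sum>j=1..CARD('m). (1 - lam j) * (U j \<bullet> (projU U k *v U j))) = (\<Sum>j=1..CARD('m). if j \<le> k then 1 - lam j else 0)"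
    by (rule sum.cong) (use projU_basis[OF orth k] orth in auto)
  also have "\<dots> = (\<Sum>j=1..k. if j \<le> k then 1 - lam j else 0) + (\<Sum>j=Suc k..CARD('m). if j \<le> k then 1 - lam j else 0)"
    by (rule split_sum[OF k])
  also have "\<dots> = (\<Sum>j=1..k. 1 - lam j)" by simp
  finally show ?thesis by (simp add: kobj_def sum_subtractf)
qed


theorem theorem3:
  fixes P :: "((real^'m^'m) \<times> (real^'m)) measure"
    and U :: "nat \<Rightarrow> real^'m" and lam :: "nat \<Rightarrow> real"
  assumes prob: "prob_space P"
    and sets_P: "sets P = sets borel"
    and supp: "AE q in P. q \<in> Sm"
    and integ: "integrable P (\<lambda>q. (norm (snd q))\<^sup>2)"
    and orth: "\<forall>i\<in>{1..CARD('m)}. \<forall>j\<in>{1..CARD('m)}. U i \<bullet> U j = (if i = j then 1 else 0)"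
    and sorted: "\<forall>i\<in>{1..CARD('m)}. \<forall>j\<in>{1..CARD('m)}. i \<le> j \<longrightarrow> lam j \<le> lam i"
    and decomp: "2 *\<^sub>R (\<integral>q. fst q \<partial>P) - outer (\<integral>q. snd q \<partial>P) (\<integral>q. snd q \<partial>P)
                   = (\<Sum>j=1..CARD('m). lam j *\<^sub>R outer (U j) (U j))"
  shows "(\<forall>k. is_kmin lam CARD('m) k \<longrightarrow> (projU U k, (mat 1 - projU U k) *v (\<integral>q. snd q \<partial>P)) \<in> Sm \<and> (\<forall>p\<in>Sm. post_risk P (projU U k, (mat 1 - projU U k) *v (\<integral>q. snd q \<partial>P)) \<le> post_risk P p))
       \<and> ((\<exists>!p. p \<in> Sm \<and> (\<forall>p'\<in>Sm. post_risk P p \<le> post_risk P p'))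
          \<longleftrightarrow> ((\<exists>!k. is_kmin lam CARD('m) k) \<and>
               (\<forall>k. is_kmin lam CARD('m) k \<longrightarrow> 1 \<le> k \<longrightarrow> k < CARD('m) \<longrightarrow> lam k > lam (k + 1))))"
proof -
  define n where "n = CARD('m)"
  define tb where "tb = (\<integral>q. snd q \<partial>P)"
  define K where "K = ((\<integral>q. (norm (fst q))\<^sup>2 + (norm (snd q))\<^sup>2 \<partial>P) - (\<integral>q. snd q \<partial>P) \<bullet> (\<integral>q. snd q \<partial>P))"
  define G where "G = (\<lambda>R::real^'m^'m. \<Sum>j=1..n. (1 - lam j) * (U j \<bullet> (R *v U j)))"
  define V where "V = (\<Sum>j=1..n. min 0 (1 - lam j))"
  define pk where "pk = (\<lambda>k. (projU U k, (mat 1 - projU U k) *v tb))"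
  have rf: "post_risk P (R, \<theta>) = G R + (norm (\<theta> - (mat 1 - R) *v tb))\<^sup>2 + K" if "(R, \<theta>) \<in> Sm" for R \<theta>
    using risk_formula[OF prob sets_P supp integ orth decomp that] unfolding G_def K_def tb_def n_def .
  have Gge: "V \<le> G R" if "(R, \<theta>) \<in> Sm" for R \<theta>
  proof -
    have Rs: "R = transpose R" and Ri: "R ** R = R" using that by (auto simp: Sm_def)
    show ?thesis unfolding V_def G_def
      by (rule sum_mono) (use G_ge[OF orth Rs Ri] n_def in auto)
  qed
  have lowb: "V + K \<le> post_risk P p" if "p \<in> Sm" for p
  proof -
    obtain R \<theta> where pp: "p = (R, \<theta>)" by fastforce
    show ?thesis using rf[of R \<theta>] Gge[of R \<theta>] that pp by (simp add: add_increasing2)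
  qed
  have pkSm: "pk k \<in> Sm" if "k \<le> n" for k
    unfolding pk_def using projU_Sm[OF orth] that n_def by simp
  have pkval: "post_risk P (pk k) = kobj lam k + K" if "k \<le> n" for k
  proof -
    have "post_risk P (pk k) = G (projU U k) + 0 + K"
      using rf[of "projU U k" "(mat 1 - projU U k) *v tb"] pkSm[OF that] unfolding pk_def by simp
    also have "G (projU U k) = kobj lam k" unfolding G_def n_def by (rule G_proj[OF orth]) (use that n_def in simp)
    finally show ?thesis by simp
  qed
  have kminV: "kobj lam k = V" "k \<le> n" if "is_kmin lam n k" for k
  proof -
    show "k \<le> n" using that by (simp add: is_kmin_def)
    then show "kobj lam k = V" using that kmin_iff[OF sorted[folded n_def]] kobj_eq_iff[of k n lam] V_def by auto
  qed
  have part1: "pk k \<in> Sm \<and> (\<forall>p\<in>Sm. post_risk P (pk k) \<le> post_risk P p)" if "is_kmin lam n k" for k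
    using kminV[OF that] pkSm pkval lowb by auto
  define isMin where "isMin = (\<lambda>p. p \<in> Sm \<and> (\<forall>p'\<in>Sm. post_risk P p \<le> post_risk P p'))"
  define K0 where "K0 = Max ({0} \<union> {j\<in>{1..n}. 1 < lam j})"
  have k0: "is_kmin lam n K0" "\<forall>j\<in>{1..n}. 1 < lam j \<longleftrightarrow> j \<le> K0"
    unfolding K0_def by (rule kmin_K[OF sorted[folded n_def], where Q="\<lambda>x. 1 < x"]; simp)+
  have lhs_iff: "(\<exists>!p. isMin p) \<longleftrightarrow> (\<forall>j\<in>{1..n}. lam j \<noteq> 1)"
  proof
    assume u: "\<exists>!p. isMin p"
    show "\<forall>j\<in>{1..n}. lam j \<noteq> 1"
    proof (rule ccontr)
      assume "\<not> (\<forall>j\<in>{1..n}. lam j \<noteq> 1)"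
      then obtain j0 where j0: "j0 \<in> {1..n}" "lam j0 = 1" by auto
      define K1 where "K1 = Max ({0} \<union> {j\<in>{1..n}. 1 \<le> lam j})"
      have k1: "is_kmin lam n K1" "\<forall>j\<in>{1..n}. 1 \<le> lam j \<longleftrightarrow> j \<le> K1"
        unfolding K1_def by (rule kmin_K[OF sorted[folded n_def], where Q="\<lambda>x. 1 \<le> x"]; simp)+
      have "\<not> j0 \<le> K0" using k0(2) j0 by (metis less_irrefl)
      moreover have "j0 \<le> K1" using k1(2) j0 by (metis order_refl)
      moreover have K1n: "K1 \<le> n" "K0 \<le> n" using k1(1) k0(1) by (auto simp: is_kmin_def)
      ultimately have "projU U K0 *v U j0 = 0" "projU U K1 *v U j0 = U j0"
        using projU_basis[OF orth, of K0 j0] projU_basis[OF orth, of K1 j0] j0 n_def by auto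
      moreover have "U j0 \<noteq> 0" using orth j0 n_def by (metis inner_zero_left zero_neq_one)
      ultimately have "pk K0 \<noteq> pk K1" unfolding pk_def by auto
      moreover have "isMin (pk K0)" "isMin (pk K1)" using part1 k0(1) k1(1) unfolding isMin_def by auto
      ultimately show False using u by blast
    qed
  next
    assume T: "\<forall>j\<in>{1..n}. lam j \<noteq> 1"
    have m0: "isMin (pk K0)" using part1 k0(1) unfolding isMin_def by auto
    have uq: "p = pk K0" if "isMin p" for p
    proof -
      obtain R \<theta> where pp: "p = (R, \<theta>)" by fastforce
      have pS: "(R, \<theta>) \<in> Sm" using that pp unfolding isMin_def by auto
      have Rs: "R = transpose R" and Ri: "R ** R = R" using pS by (auto simp: Sm_def)
      have K0n: "K0 \<le> n" using k0(1) by (simp add: is_kmin_def)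
      have "post_risk P (R, \<theta>) \<le> post_risk P (pk K0)" using that pp pkSm[OF K0n] unfolding isMin_def by auto
      also have "\<dots> = V + K" using pkval[OF K0n] kminV[OF k0(1)] by simp
      finally have le: "G R + (norm (\<theta> - (mat 1 - R) *v tb))\<^sup>2 \<le> V" using rf[OF pS] by simp
      have GV: "G R = V" and nz: "(norm (\<theta> - (mat 1 - R) *v tb))\<^sup>2 = 0"
        using le Gge[OF pS] zero_le_power2[of "norm (\<theta> - (mat 1 - R) *v tb)"] by linarith+
      have "(\<Sum>j=1..n. (1 - lam j) * (U j \<bullet> (R *v U j)) - min 0 (1 - lam j)) = 0"
        using GV unfolding G_def V_def by (simp add: sum_subtractf)
      moreover have nn: "0 \<le> (1 - lam x) * (U x \<bullet> (R *v U x)) - min 0 (1 - lam x)" if "x \<in> {1..n}" for x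
        using G_ge[OF orth Rs Ri, of x lam] that n_def by simp
      ultimately have trm0: "\<forall>x\<in>{1..n}. (1 - lam x) * (U x \<bullet> (R *v U x)) - min 0 (1 - lam x) = 0"
        using sum_nonneg_eq_0_iff[of "{1..n}" "\<lambda>j. (1 - lam j) * (U j \<bullet> (R *v U j)) - min 0 (1 - lam j)"] by auto
      have trm: "(1 - lam j) * (U j \<bullet> (R *v U j)) = min 0 (1 - lam j)" if "j \<in> {1..n}" for j
        using trm0 that by auto
      have act: "R *v U j = projU U K0 *v U j" if j: "j \<in> {1..n}" for j
      proof -
        have u: "U j \<bullet> U j = 1" using orth j n_def by auto
        have tj: "(1 - lam j) * (U j \<bullet> (R *v U j)) = min 0 (1 - lam j)" by (rule trm[OF j])
        show ?thesis
        proof (cases "1 < lam j")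
          case True
          then have "U j \<bullet> (R *v U j) = 1" using tj by (simp add: min_def)
          then have "R *v U j = U j" using quad_one[OF Rs Ri, of "U j"] u by simp
          moreover have "j \<le> K0" using k0(2) j True by blast
          ultimately show ?thesis using projU_basis[OF orth, of K0 j] K0n j n_def by simp
        next
          case False
          then have "lam j < 1" using T j by force
          then have "U j \<bullet> (R *v U j) = 0" using tj by (simp add: min_def)
          then have "R *v U j = 0" using quad_zero[OF Rs Ri, of "U j"] by simp
          moreover have "\<not> j \<le> K0" using k0(2) j False by blast
          ultimately show ?thesis using projU_basis[OF orth, of K0 j] K0n j n_def by simp
        qed
      qed
      have Req: "R = projU U K0"
        unfolding matrix_eq
      proof
        fix x
        have "R *v x = R *v (\<Sum>j=1..n. (U j \<bullet> x) *\<^sub>R U j)" using complete_basis[OF orth, of x] n_def by simp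
        also have "\<dots> = (\<Sum>j=1..n. (U j \<bullet> x) *\<^sub>R (R *v U j))" by (simp add: mv_sum matrix_vector_mult_scaleR)
        also have "\<dots> = (\<Sum>j=1..n. (U j \<bullet> x) *\<^sub>R (projU U K0 *v U j))" by (rule sum.cong) (use act in auto)
        also have "\<dots> = projU U K0 *v (\<Sum>j=1..n. (U j \<bullet> x) *\<^sub>R U j)" by (simp add: mv_sum matrix_vector_mult_scaleR)
        also have "\<dots> = projU U K0 *v x" using complete_basis[OF orth, of x] n_def by simp
        finally show "R *v x = projU U K0 *v x" .
      qed
      have "\<theta> = (mat 1 - R) *v tb" using nz by simp
      then show ?thesis using pp Req unfolding pk_def by simp
    qed
    show "\<exists>!p. isMin p" using m0 uq by blast
  qed
  show ?thesis
    using part1 lhs_iff rhs_iff[OF sorted[folded n_def]]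
    unfolding isMin_def pk_def tb_def n_def by simp
qed


end
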